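(* Let $V$ be a real sequence and suppose $(-\Delta+V)\psi=0$ has two linearly independent positive solutions $\psi^+,\psi^-$ on $m\le n\le N$, with $N\ge m+2$, normalized so that $\psi^-_n\psi^+_{n+1}-\psi^-_{n+1}\psi^+_n=1$, and let $G_{jk}=\psi^+_{\min(j,k)}\psi^-_{\max(j,k)}$ be the associated Green matrix. Define $z_n:=\sqrt{G_{nn}}$ for $m\le n\le N$, $$S^{[z]}_n:=\frac{1+\sqrt{1+4z_n^2z_{n-1}^2}}{2z_nz_{n-1}}\quad(m<n\le N),\qquad \varphi^\pm_n:=z_n\prod_{k=m+1}^n\big(S^{[z]}_k\big)^{\pm1}.$$ Then: (1) $\varphi^+,\varphi^-$ are an independent pair of solutions of $(-\Delta+V)\varphi=0$ at all interior points $m<n<N$; (2) $G_{nk}=z_nz_k\prod_{\ell=k+1}^n\frac{1}{S^{[z]}_\ell}$ for $m<k<n\le N$; (3) for $m<n<N$, $\frac12\left(\sqrt{1+4G_{nn}G_{n+1\,n+1}}+\sqrt{1+4G_{nn}G_{n-1\,n-1}}\right)=(2+V_n)G_{nn}$.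
   Context: $(\Delta f)_n=f_{n+1}+f_{n-1}-2f_n$; $(-\Delta+V)\psi=0$ at $n$ means $-\psi_{n+1}-\psi_{n-1}+(2+V_n)\psi_n=0$. *)

theory Defs
  imports Complex_Main
begin

definition solves_at :: "(int \<Rightarrow> real) \<Rightarrow> (int \<Rightarrow> real) \<Rightarrow> int \<Rightarrow> bool" where
  "solves_at V f n \<longleftrightarrow> - f (n + 1) - f (n - 1) + (2 + V n) * f n = 0"

definition green :: "(int \<Rightarrow> real) \<Rightarrow> (int \<Rightarrow> real) \<Rightarrow> int \<Rightarrow> int \<Rightarrow> real" where
  "green psip psim j k = psip (min j k) * psim (max j k)"

definition Sz :: "(int \<Rightarrow> real) \<Rightarrow> int \<Rightarrow> real" where
  "Sz z n = (1 + sqrt (1 + 4 * (z n)\<^sup>2 * (z (n - 1))\<^sup>2)) / (2 * z n * z (n - 1))"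

definition phi_plus :: "(int \<Rightarrow> real) \<Rightarrow> int \<Rightarrow> int \<Rightarrow> real" where
  "phi_plus z m n = z n * (\<Prod>k\<in>{m+1..n}. Sz z k)"

definition phi_minus :: "(int \<Rightarrow> real) \<Rightarrow> int \<Rightarrow> int \<Rightarrow> real" where
  "phi_minus z m n = z n * (\<Prod>k\<in>{m+1..n}. inverse (Sz z k))"

end

theory Submission
  imports Defs
begin

lemma Sz_eq:
  fixes z :: "int \<Rightarrow> real"
  assumes pn: "pn > 0" and qn: "qn > 0" and p': "p' > 0" and q': "q' > 0"
    and w: "q' * pn - p' * qn = 1"
    and zn: "z n = sqrt (pn * qn)" and zn': "z (n-1) = sqrt (p' * q')"
  shows "Sz z n = (sqrt pn / sqrt qn) / (sqrt p' / sqrt q')"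
proof -
  have sq1: "(z n)\<^sup>2 = pn * qn" using zn pn qn by simp
  have sq2: "(z (n-1))\<^sup>2 = p' * q'" using zn' p' q' by simp
  have "1 + 4 * (z n)\<^sup>2 * (z (n - 1))\<^sup>2 = (q' * pn + p' * qn)\<^sup>2"
  proof -
    have h: "(q' * pn + p' * qn)\<^sup>2 = (q' * pn - p' * qn)\<^sup>2 + 4 * (q' * pn) * (p' * qn)"
      by (simp add: power2_eq_square algebra_simps)
    show ?thesis unfolding sq1 sq2 h w by (simp add: algebra_simps)
  qed
  hence r: "sqrt (1 + 4 * (z n)\<^sup>2 * (z (n - 1))\<^sup>2) = q' * pn + p' * qn"
    using pn qn p' q' by simp
  have w': "q' * pn = 1 + p' * qn" using w by simp
  have num: "1 + (q' * pn + p' * qn) = 2 * (q' * pn)" using w' by linarith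
  have "Sz z n = (2 * (q' * pn)) / (2 * (sqrt pn * sqrt qn) * (sqrt p' * sqrt q'))"
    unfolding Sz_def r num by (simp add: zn zn' real_sqrt_mult)
  also have "\<dots> = (sqrt pn / sqrt qn) / (sqrt p' / sqrt q')"
  proof -
    have a: "sqrt pn * sqrt pn = pn" "sqrt q' * sqrt q' = q'" using pn q' by simp_all
    have "sqrt pn > 0" "sqrt qn > 0" "sqrt p' > 0" "sqrt q' > 0" using pn qn p' q' by simp_all
    thus ?thesis using a by (simp add: field_simps)
  qed
  finally show ?thesis .
qed

lemma telescope:
  fixes f :: "int \<Rightarrow> real"
  assumes "k \<le> n" and "\<And>l. k \<le> l \<Longrightarrow> l \<le> n \<Longrightarrow> f l \<noteq> 0"
  shows "(\<Prod>l\<in>{k+1..n}. f l / f (l-1)) = f n / f k"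
proof -
  have "\<forall>n'. k \<le> n' \<longrightarrow> n' \<le> n \<longrightarrow> (\<Prod>l\<in>{k+1..n'}. f l / f (l-1)) = f n' / f k"
  proof (intro allI impI)
    fix n' assume a: "k \<le> n'" "n' \<le> n"
    show "(\<Prod>l\<in>{k+1..n'}. f l / f (l-1)) = f n' / f k"
      using a
    proof (induction n' rule: int_ge_induct)
      case base
      then show ?case using assms(2)[of k] by simp
    next
      case (step i)
      have e: "{k+1..i+1} = insert (i+1) {k+1..i}" using step by auto
      have IH: "(\<Prod>l\<in>{k+1..i}. f l / f (l-1)) = f i / f k" using step by auto
      have "f i \<noteq> 0" using step assms(2)[of i] by auto
      then show ?case unfolding e using IH by simp
    qed
  qed
  thus ?thesis using assms(1) by simp
qed


lemma sqrt_wr: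
  fixes a b :: real
  assumes "a - b = 1" "a > 0" "b > 0"
  shows "sqrt (1 + 4 * (a * b)) = a + b"
proof -
  have "1 + 4 * (a * b) = (a + b)\<^sup>2"
  proof -
    have h: "(a + b)\<^sup>2 = (a - b)\<^sup>2 + 4 * (a * b)" by (simp add: power2_eq_square algebra_simps)
    show ?thesis unfolding h assms(1) by simp
  qed
  thus ?thesis using assms by simp
qed

theorem theorem8:
  fixes V psip psim :: "int \<Rightarrow> real" and m N :: int
  assumes "N \<ge> m + 2"
    and sol_p: "\<And>n. m < n \<Longrightarrow> n < N \<Longrightarrow> solves_at V psip n"
    and sol_m: "\<And>n. m < n \<Longrightarrow> n < N \<Longrightarrow> solves_at V psim n"
    and pos_p: "\<And>n. m \<le> n \<Longrightarrow> n \<le> N \<Longrightarrow> psip n > 0"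
    and pos_m: "\<And>n. m \<le> n \<Longrightarrow> n \<le> N \<Longrightarrow> psim n > 0"
    and indep: "\<And>a b. (\<And>n. m \<le> n \<Longrightarrow> n \<le> N \<Longrightarrow> a * psip n + b * psim n = 0) \<Longrightarrow> a = 0 \<and> b = 0"
    and wronsk: "\<And>n. m \<le> n \<Longrightarrow> n < N \<Longrightarrow> psim n * psip (n + 1) - psim (n + 1) * psip n = 1"
  defines "G \<equiv> green psip psim"
  defines "z \<equiv> (\<lambda>n. sqrt (G n n))"
  shows "(\<forall>n. m < n \<and> n < N \<longrightarrow> solves_at V (phi_plus z m) n \<and> solves_at V (phi_minus z m) n)
       \<and> (\<forall>a b. (\<forall>n. m \<le> n \<and> n \<le> N \<longrightarrow> a * phi_plus z m n + b * phi_minus z m n = 0) \<longrightarrow> a = 0 \<and> b = 0)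
       \<and> (\<forall>n k. m < k \<and> k < n \<and> n \<le> N \<longrightarrow>
              G n k = z n * z k * (\<Prod>l\<in>{k+1..n}. 1 / Sz z l))
       \<and> (\<forall>n. m < n \<and> n < N \<longrightarrow>
              (sqrt (1 + 4 * G n n * G (n+1) (n+1)) + sqrt (1 + 4 * G n n * G (n-1) (n-1))) / 2
              = (2 + V n) * G n n)"
proof -
  define P where "P = psip"
  define Q where "Q = psim"
  define s where "s = (\<lambda>l. sqrt (P l) / sqrt (Q l))"
  have Gd: "G j k = P (min j k) * Q (max j k)" for j k unfolding G_def green_def P_def Q_def by simp
  have Gnn: "G l l = P l * Q l" for l using Gd by simp
  have zv: "z l = sqrt (P l * Q l)" for l unfolding z_def Gnn ..
  have Pp: "m \<le> l \<Longrightarrow> l \<le> N \<Longrightarrow> P l > 0" for l using pos_p P_def by simp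
  have Qp: "m \<le> l \<Longrightarrow> l \<le> N \<Longrightarrow> Q l > 0" for l using pos_m Q_def by simp
  have sp: "m \<le> l \<Longrightarrow> l \<le> N \<Longrightarrow> s l > 0" for l using Pp Qp s_def by simp
  have W: "m \<le> l \<Longrightarrow> l < N \<Longrightarrow> Q l * P (l + 1) - Q (l + 1) * P l = 1" for l
    using wronsk P_def Q_def by simp
  have SzE: "Sz z l = s l / s (l-1)" if "m < l" "l \<le> N" for l
  proof -
    have w: "Q (l-1) * P l - P (l-1) * Q l = 1" using W[of "l-1"] that by (simp add: mult.commute)
    show ?thesis unfolding s_def
      by (rule Sz_eq[OF _ _ _ _ w zv[of l] zv[of "l-1"]]) (use that Pp Qp zv in auto)
  qed
  have prodS: "(\<Prod>l\<in>{k+1..n}. Sz z l) = s n / s k" if "m \<le> k" "k \<le> n" "n \<le> N" for k n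
  proof -
    have "(\<Prod>l\<in>{k+1..n}. Sz z l) = (\<Prod>l\<in>{k+1..n}. s l / s (l-1))"
      by (rule prod.cong) (use that SzE in auto)
    also have "\<dots> = s n / s k"
    proof (rule telescope)
      fix l assume "k \<le> l" "l \<le> n"
      thus "s l \<noteq> 0" using sp[of l] that by simp
    qed (use that in simp)
    finally show ?thesis .
  qed
  have prodI: "(\<Prod>l\<in>{k+1..n}. inverse (Sz z l)) = s k / s n" if "m \<le> k" "k \<le> n" "n \<le> N" for k n
    using prod_inversef[of "Sz z" "{k+1..n}"] prodS[OF that] by (simp add: o_def)
  have prod1: "(\<Prod>l\<in>{k+1..n}. 1 / Sz z l) = s k / s n" if "m \<le> k" "k \<le> n" "n \<le> N" for k n
    using prodI[OF that] by (simp add: divide_inverse)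
  have sqa: "sqrt (x * y) * (sqrt x / sqrt y) = x" if "x > 0" "y > 0" for x y :: real
    using that by (simp add: real_sqrt_mult field_simps)
  have sqb: "sqrt (x * y) / (sqrt x / sqrt y) = y" if "x > 0" "y > 0" for x y :: real
    using that by (simp add: real_sqrt_mult field_simps)
  have php: "phi_plus z m n = P n / s m" if "m \<le> n" "n \<le> N" for n
  proof -
    have "phi_plus z m n = z n * (s n / s m)" unfolding phi_plus_def using prodS[of m n] that by simp
    also have "\<dots> = (z n * s n) / s m" by simp
    also have "z n * s n = P n" unfolding zv s_def using sqa Pp Qp that by simp
    finally show ?thesis .
  qed
  have phm: "phi_minus z m n = Q n * s m" if "m \<le> n" "n \<le> N" for n
  proof -
    have "phi_minus z m n = z n * (s m / s n)" unfolding phi_minus_def using prodI[of m n] that by simp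
    also have "\<dots> = (z n / s n) * s m" by simp
    also have "z n / s n = Q n" unfolding zv s_def using sqb Pp Qp that by simp
    finally show ?thesis .
  qed
  have c1: "\<forall>n. m < n \<and> n < N \<longrightarrow> solves_at V (phi_plus z m) n \<and> solves_at V (phi_minus z m) n"
  proof (intro allI impI)
    fix n assume n: "m < n \<and> n < N"
    have e1: "- P (n + 1) - P (n - 1) + (2 + V n) * P n = 0" using sol_p[of n] n
      unfolding solves_at_def P_def by simp
    have e2: "- Q (n + 1) - Q (n - 1) + (2 + V n) * Q n = 0" using sol_m[of n] n
      unfolding solves_at_def Q_def by simp
    have "- (P (n + 1) / s m) - P (n - 1) / s m + (2 + V n) * (P n / s m)
          = (- P (n + 1) - P (n - 1) + (2 + V n) * P n) / s m" by (simp add: diff_divide_distrib add_divide_distrib)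
    hence a: "- (P (n + 1) / s m) - P (n - 1) / s m + (2 + V n) * (P n / s m) = 0" using e1 by simp
    have "- (Q (n + 1) * s m) - Q (n - 1) * s m + (2 + V n) * (Q n * s m)
          = (- Q (n + 1) - Q (n - 1) + (2 + V n) * Q n) * s m" by (simp add: field_simps)
    hence b: "- (Q (n + 1) * s m) - Q (n - 1) * s m + (2 + V n) * (Q n * s m) = 0" using e2 by simp
    show "solves_at V (phi_plus z m) n \<and> solves_at V (phi_minus z m) n"
      unfolding solves_at_def using a b n php phm by simp
  qed
  have c2: "\<forall>a b. (\<forall>n. m \<le> n \<and> n \<le> N \<longrightarrow> a * phi_plus z m n + b * phi_minus z m n = 0) \<longrightarrow> a = 0 \<and> b = 0"
  proof (intro allI impI)
    fix a b assume h: "\<forall>n. m \<le> n \<and> n \<le> N \<longrightarrow> a * phi_plus z m n + b * phi_minus z m n = 0"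
    have smp: "s m > 0" using sp assms(1) by simp
    have "(a / s m) * psip n + (b * s m) * psim n = 0" if "m \<le> n" "n \<le> N" for n
      using h that php phm unfolding P_def Q_def by (simp add: mult_ac)
    hence "a / s m = 0 \<and> b * s m = 0" by (rule indep)
    thus "a = 0 \<and> b = 0" using smp by simp
  qed
  have c3: "\<forall>n k. m < k \<and> k < n \<and> n \<le> N \<longrightarrow> G n k = z n * z k * (\<Prod>l\<in>{k+1..n}. 1 / Sz z l)"
  proof (intro allI impI)
    fix n k assume h: "m < k \<and> k < n \<and> n \<le> N"
    have "z n * z k * (\<Prod>l\<in>{k+1..n}. 1 / Sz z l) = (z k * s k) * (z n / s n)"
      using prod1[of k n] h by simp
    also have "\<dots> = P k * Q n" unfolding zv s_def using sqa sqb Pp Qp h by simp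
    also have "\<dots> = G n k" using Gd h by simp
    finally show "G n k = z n * z k * (\<Prod>l\<in>{k+1..n}. 1 / Sz z l)" by simp
  qed
  have c4: "\<forall>n. m < n \<and> n < N \<longrightarrow>
              (sqrt (1 + 4 * G n n * G (n+1) (n+1)) + sqrt (1 + 4 * G n n * G (n-1) (n-1))) / 2
              = (2 + V n) * G n n"
  proof (intro allI impI)
    fix n assume n: "m < n \<and> n < N"
    have e1: "P (n + 1) + P (n - 1) = (2 + V n) * P n" using sol_p[of n] n
      unfolding solves_at_def P_def by simp
    have e2: "Q (n + 1) + Q (n - 1) = (2 + V n) * Q n" using sol_m[of n] n
      unfolding solves_at_def Q_def by simp
    have r1: "sqrt (1 + 4 * G n n * G (n+1) (n+1)) = Q n * P (n+1) + Q (n+1) * P n"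
    proof -
      have "4 * G n n * G (n+1) (n+1) = 4 * ((Q n * P (n+1)) * (Q (n+1) * P n))"
        unfolding Gnn by (simp add: mult_ac)
      thus ?thesis unfolding Gnn using sqrt_wr[OF W[of n]] n Pp Qp by (simp add: mult_ac)
    qed
    have r2: "sqrt (1 + 4 * G n n * G (n-1) (n-1)) = Q (n-1) * P n + Q n * P (n-1)"
    proof -
      have w: "Q (n-1) * P n - Q n * P (n-1) = 1" using W[of "n-1"] n by simp
      have "4 * G n n * G (n-1) (n-1) = 4 * ((Q (n-1) * P n) * (Q n * P (n-1)))"
        unfolding Gnn by (simp add: mult_ac)
      thus ?thesis unfolding Gnn using sqrt_wr[OF w] n Pp Qp by (simp add: mult_ac)
    qed
    have "Q n * P (n+1) + Q (n+1) * P n + (Q (n-1) * P n + Q n * P (n-1))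
          = Q n * (P (n + 1) + P (n - 1)) + P n * (Q (n + 1) + Q (n - 1))"
      by (simp add: algebra_simps)
    also have "\<dots> = 2 * ((2 + V n) * G n n)" unfolding e1 e2 Gnn by (simp add: algebra_simps)
    finally show "(sqrt (1 + 4 * G n n * G (n+1) (n+1)) + sqrt (1 + 4 * G n n * G (n-1) (n-1))) / 2
              = (2 + V n) * G n n" unfolding r1 r2 by simp
  qed
  show ?thesis using c1 c2 c3 c4 by blast
qed

end
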